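(* Let $0<\alpha<1$, $T>1$, and $u\in C^1[0,T]$. Then for $t\in[0,T-1]$, $$I^{\alpha}_{0^+}\left(\int_{t}^{t+1}D^{\alpha}_{0^+}u(s)\,ds\right)=\int_{t}^{t+1}u(s)\,ds-\int_{0}^{1}u(s)\,ds+\frac{1}{\Gamma(2-\alpha)}I^{\alpha}_{0^+}\left(\int_{0}^{1}\left[(t+1-r)^{1-\alpha}-t^{1-\alpha}\right]u'(r)\,dr\right),$$ where on both sides $I^\alpha_{0^+}$ acts on the displayed expression regarded as a function of $t$.
   Context: For $0<\alpha<1$, the Caputo fractional derivative is $D^{\alpha}_{0^+}u(t)=\frac{1}{\Gamma(1-\alpha)}\int_0^t (t-s)^{-\alpha}u'(s)\,ds$ and the Riemann–Liouville fractional integral is $I^{\alpha}_{0^+}g(t)=\frac{1}{\Gamma(\alpha)}\int_0^t (t-s)^{\alpha-1}g(s)\,ds$. *)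

theory Defs
  imports "HOL-Analysis.Analysis"
begin

definition C1_on :: "real \<Rightarrow> real \<Rightarrow> (real \<Rightarrow> real) \<Rightarrow> bool" where
  "C1_on a b u \<longleftrightarrow> (\<exists>u'. (\<forall>x\<in>{a..b}. (u has_real_derivative u' x) (at x within {a..b}))
                          \<and> continuous_on {a..b} u')"

definition RL_integral :: "real \<Rightarrow> (real \<Rightarrow> real) \<Rightarrow> real \<Rightarrow> real" where
  "RL_integral \<alpha> g t = (1 / Gamma \<alpha>) * integral {0..t} (\<lambda>s. (t - s) powr (\<alpha> - 1) * g s)"

definition caputo_deriv :: "real \<Rightarrow> (real \<Rightarrow> real) \<Rightarrow> real \<Rightarrow> real" where
  "caputo_deriv \<alpha> u t = (1 / Gamma (1 - \<alpha>)) * integral {0..t} (\<lambda>s. (t - s) powr (- \<alpha>) * deriv u s)"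

end

theory Submission
  imports Defs
begin


lemma kernel_has_integral:
  fixes c t :: real
  assumes "c > 0" "t \<ge> 0"
  shows "((\<lambda>s. (t - s) powr (c - 1)) has_integral (t powr c / c)) {0..t}"
proof -
  have "((\<lambda>x. x powr (c - 1)) has_integral (t powr c / c)) {0..t}"
    using has_integral_powr_from_0[of "c-1" t] assms by simp
  then have "((\<lambda>x. x powr (c - 1)) has_integral (t powr c / c)) (cbox 0 t)" by simp
  from has_integral_affinity[OF this, of "-1" t]
  have "((\<lambda>x. (- x + t) powr (c - 1)) has_integral (t powr c / c)) ((\<lambda>x. - x + t) ` cbox 0 t)"
    by simp
  moreover have "(\<lambda>x. - x + t) ` cbox 0 t = {0..t}"
    using assms by (auto simp: image_iff intro!: bexI[where x="t - _"])
  ultimately show ?thesis by simp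
qed

lemma beta_shift_has_integral:
  fixes a b r x :: real
  assumes a: "a > 0" and b: "b > 0" and rx: "r < x"
  shows "((\<lambda>s. (x - s) powr (a - 1) * (s - r) powr (b - 1)) has_integral
            Beta a b * (x - r) powr (a + b - 1)) {r..x}"
proof -
  define d where "d = x - r"
  have d: "d > 0" using rx by (simp add: d_def)
  have "((\<lambda>t. t powr (b - 1) * (1 - t) powr (a - 1)) has_integral Beta a b) (cbox 0 1)" (is ?B)
    using has_integral_Beta_real[OF b a] by (simp add: Beta_commute)
  note B = this
  have e: "(d * d + d * r) / d = d + r" using d by (simp add: field_simps)
  from has_integral_affinity'[OF B, of "1/d" "- r/d"] d
  have "((\<lambda>s. ((1/d) * s - r/d) powr (b - 1) * (1 - ((1/d) * s - r/d)) powr (a - 1))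
          has_integral Beta a b * d) (cbox r (r + d))"
    by (simp add: field_simps e)
  also have "r + d = x" by (simp add: d_def)
  finally have I: "((\<lambda>s. ((1/d) * s - r/d) powr (b - 1) * (1 - ((1/d) * s - r/d)) powr (a - 1))
          has_integral Beta a b * d) {r..x}" by simp
  have eq: "(x - s) powr (a - 1) * (s - r) powr (b - 1) =
        d powr (a + b - 2) * (((1/d) * s - r/d) powr (b - 1) * (1 - ((1/d) * s - r/d)) powr (a - 1))"
    if "s \<in> {r..x}" for s
  proof -
    have 1: "(1/d) * s - r/d = (s - r) / d" using d by (simp add: field_simps)
    have 2: "1 - ((1/d) * s - r/d) = (x - s) / d"
    proof -
      have "1 - ((1/d) * s - r/d) = (d - (s - r)) / d" using d by (simp add: field_simps)
      also have "d - (s - r) = x - s" by (simp add: d_def)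
      finally show ?thesis .
    qed
    have "(s - r) / d \<ge> 0" "(x - s) / d \<ge> 0" using that d by auto
    have 3: "d powr (a + b - 2) = d powr (a - 1) * d powr (b - 1)"
      using d by (simp add: powr_add[symmetric])
    have 4: "d powr (a - 1) > 0" "d powr (b - 1) > 0" using d by auto
    have "x - s \<ge> 0" "s - r \<ge> 0" using that by auto
    have xd: "x - s = d + r - s" by (simp add: d_def)
    then show ?thesis unfolding 1 2 3 using 4 \<open>x - s \<ge> 0\<close> \<open>s - r \<ge> 0\<close>
      by (simp add: powr_divide field_simps)
  qed
  have "((\<lambda>s. d powr (a + b - 2) * (((1/d) * s - r/d) powr (b - 1) * (1 - ((1/d) * s - r/d)) powr (a - 1)))
          has_integral d powr (a + b - 2) * (Beta a b * d)) {r..x}"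
    by (rule has_integral_mult_right[OF I])
  moreover have "d powr (a + b - 2) * (Beta a b * d) = Beta a b * (x - r) powr (a + b - 1)"
  proof -
    have "d powr (a + b - 2) * d = d powr (a + b - 2) * d powr 1" using d by simp
    also have "\<dots> = d powr (a + b - 2 + 1)" by (rule powr_add[symmetric])
    also have "a + b - 2 + 1 = a + b - 1" by simp
    finally show ?thesis by (simp add: d_def mult_ac)
  qed
  ultimately show ?thesis
    using has_integral_spike_finite_eq[of "{}"] eq
    by (smt (verit) has_integral_eq)
qed



lemma nonneg_has_integral_lborel:
  fixes \<phi> :: "real \<Rightarrow> real"
  assumes nn: "\<And>s. s \<in> S \<Longrightarrow> 0 \<le> \<phi> s" and I: "(\<phi> has_integral I) S"
    and m: "(\<lambda>s. indicator S s * \<phi> s) \<in> borel_measurable borel"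
  shows "integrable lborel (\<lambda>s. indicator S s * \<phi> s)"
    and "(\<integral>s. indicator S s * \<phi> s \<partial>lborel) = I"
proof -
  have I0: "I \<ge> 0" using has_integral_nonneg[OF I] nn by auto
  have "(\<integral>\<^sup>+s. ennreal (indicator S s * \<phi> s) \<partial>lborel) = ennreal I"
    using nn_integral_has_integral_lebesgue[OF nn I] by simp
  moreover have "AE s in lborel. 0 \<le> indicator S s * \<phi> s"
    using nn by (auto simp: indicator_def)
  ultimately have "integrable lborel (\<lambda>s. indicator S s * \<phi> s) \<and> (\<integral>s. indicator S s * \<phi> s \<partial>lborel) = I"
    using nn_integral_eq_integrable[of "\<lambda>s. indicator S s * \<phi> s" lborel I] m I0 by simp
  then show "integrable lborel (\<lambda>s. indicator S s * \<phi> s)"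
    and "(\<integral>s. indicator S s * \<phi> s \<partial>lborel) = I" by auto
qed

lemma test_meas:
  fixes x a b :: real and g0 :: "real \<Rightarrow> real"
  assumes [measurable]: "g0 \<in> borel_measurable borel"
  shows "(\<lambda>(r,s). g0 r * (indicator {r..x} s * ((x - s) powr (a-1) * (s - r) powr (b-1)))) \<in> borel_measurable (lborel \<Otimes>\<^sub>M lborel)"
proof -
  have "(\<lambda>(r,s). g0 r * (indicator {r..x} s * ((x - s) powr (a-1) * (s - r) powr (b-1)))) =
     (\<lambda>p. g0 (fst p) * ((if fst p \<le> snd p \<and> snd p \<le> x then 1 else 0) * ((x - snd p) powr (a-1) * (snd p - fst p) powr (b-1))))"
    by (auto simp: indicator_def fun_eq_iff)
  also have "\<dots> \<in> borel_measurable (borel \<Otimes>\<^sub>M borel)"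
    by measurable
  finally show ?thesis by (simp cong: measurable_cong_sets)
qed



lemma key_fubini:
  fixes a b x :: real and g :: "real \<Rightarrow> real"
  assumes a: "a > 0" and b: "b > 0" and ab: "a + b > 1" and x: "x \<ge> 0"
    and g: "continuous_on {0..x} g"
  shows "(\<lambda>s. (x - s) powr (a - 1) * integral {0..s} (\<lambda>r. (s - r) powr (b - 1) * g r)) integrable_on {0..x}"
    and "integral {0..x} (\<lambda>s. (x - s) powr (a - 1) * integral {0..s} (\<lambda>r. (s - r) powr (b - 1) * g r))
         = Beta a b * integral {0..x} (\<lambda>r. (x - r) powr (a + b - 1) * g r)"
proof -
  define g0 where "g0 = (\<lambda>r. indicator {0..x} r * g r)"
  have g0m[measurable]: "g0 \<in> borel_measurable borel"
    using borel_measurable_continuous_on_indicator[OF _ g] by (simp add: g0_def)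
  have "compact (g ` {0..x})" by (intro compact_continuous_image g) auto
  then obtain M where M: "\<And>y. y \<in> g ` {0..x} \<Longrightarrow> norm y \<le> M"
    using compact_imp_bounded bounded_iff by metis
  have gM: "\<bar>g0 r\<bar> \<le> max M 0" for r
    using M[of "g r"] by (auto simp: g0_def indicator_def)
  define M' where "M' = max M 0"
  have M'0: "M' \<ge> 0" by (simp add: M'_def)
  have gM': "\<bar>g0 r\<bar> \<le> M'" for r using gM by (simp add: M'_def)
  have Bpos: "Beta a b > 0" using a b by (simp add: Beta_def)
  define \<psi> where "\<psi> = (\<lambda>r s. indicator {r..x} s * ((x - s) powr (a-1) * (s - r) powr (b-1)))"
  define F where "F = (\<lambda>r s. g0 r * \<psi> r s)"
  have \<psi>m: "\<psi> r \<in> borel_measurable borel" for r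
  proof -
    have "\<psi> r = (\<lambda>s. (if r \<le> s \<and> s \<le> x then 1 else 0) * ((x - s) powr (a-1) * (s - r) powr (b-1)))"
      by (auto simp: \<psi>_def indicator_def fun_eq_iff)
    also have "\<dots> \<in> borel_measurable borel" by measurable
    finally show ?thesis .
  qed
  have Fm: "(\<lambda>(r,s). F r s) \<in> borel_measurable (lborel \<Otimes>\<^sub>M lborel)"
    using test_meas[OF g0m, of x a b] by (simp add: F_def \<psi>_def)
  have \<psi>nn: "\<psi> r s \<ge> 0" for r s by (auto simp: \<psi>_def indicator_def)
  have \<psi>int: "integrable lborel (\<psi> r) \<and> (\<integral>s. \<psi> r s \<partial>lborel) = Beta a b * (x - r) powr (a + b - 1)"
    if "r < x" for r
    using nonneg_has_integral_lborel[OF _ beta_shift_has_integral[OF a b that]] \<psi>m[of r, unfolded \<psi>_def]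
    by (auto simp: \<psi>_def)
  have \<psi>zero: "\<psi> r = (\<lambda>s. 0)" if "r \<ge> x" for r
    using that by (auto simp: \<psi>_def indicator_def fun_eq_iff)
  define \<Phi> where "\<Phi> = (\<lambda>r. g0 r * (Beta a b * (x - r) powr (a + b - 1)))"
  have Fint: "integrable lborel (F r) \<and> (\<integral>s. F r s \<partial>lborel) = \<Phi> r
      \<and> (\<integral>s. norm (F r s) \<partial>lborel) = \<bar>g0 r\<bar> * (Beta a b * (x - r) powr (a + b - 1))" for r
  proof (cases "r < x")
    case True
    have n: "norm (F r s) = \<bar>g0 r\<bar> * \<psi> r s" for s using \<psi>nn[of r s] by (simp add: F_def abs_mult)
    show ?thesis using \<psi>int[OF True] unfolding n by (simp add: F_def \<Phi>_def)
  next
    case False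
    then have "g0 r = 0 \<or> r = x" by (auto simp: g0_def indicator_def)
    then show ?thesis using \<psi>zero[of r] False by (auto simp: F_def \<Phi>_def)
  qed
  have \<Phi>abs: "integrable lborel (\<lambda>r. \<bar>g0 r\<bar> * (Beta a b * (x - r) powr (a + b - 1)))"
  proof -
    have "continuous_on {0..x} (\<lambda>r. \<bar>g r\<bar> * (Beta a b * (x - r) powr (a + b - 1)))"
      using ab by (intro continuous_intros continuous_on_powr' g) auto
    from borel_integrable_atLeastAtMost'[OF this]
    show ?thesis unfolding set_integrable_def
      by (rule back_subst[where P="integrable lborel"]) (auto simp: g0_def indicator_def fun_eq_iff)
  qed
  have Fprod: "integrable (lborel \<Otimes>\<^sub>M lborel) (\<lambda>(r,s). F r s)"
    by (rule lborel_pair.Fubini_integrable[OF Fm]) (use Fint \<Phi>abs in auto)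
  have fub: "(\<integral>s. (\<integral>r. F r s \<partial>lborel) \<partial>lborel) = (\<integral>r. (\<integral>s. F r s \<partial>lborel) \<partial>lborel)"
    by (rule lborel_pair.Fubini_integral[OF Fprod])
  have intsnd: "integrable lborel (\<lambda>s. \<integral>r. F r s \<partial>lborel)"
    by (rule lborel_pair.integrable_snd[OF Fprod])
  define fL where "fL = (\<lambda>s. (x - s) powr (a - 1) * integral {0..s} (\<lambda>r. (s - r) powr (b - 1) * g r))"
  have inner: "(\<integral>r. F r s \<partial>lborel) = indicator {0..x} s * fL s" for s
  proof -
    have "F r s = indicator {0..x} s * (x - s) powr (a - 1) * (indicator {0..s} r * ((s - r) powr (b - 1) * g0 r))" for r
      by (auto simp: F_def \<psi>_def g0_def indicator_def)
    then have "(\<integral>r. F r s \<partial>lborel) = indicator {0..x} s * (x - s) powr (a - 1) *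
        (\<integral>r. indicator {0..s} r * ((s - r) powr (b - 1) * g0 r) \<partial>lborel)"
      by simp
    also have "\<dots> = indicator {0..x} s * fL s"
    proof (cases "s \<in> {0..x}")
      case True
      have si: "set_integrable lborel {0..s} (\<lambda>r. (s - r) powr (b - 1) * g0 r)"
        unfolding set_integrable_def
      proof (rule Bochner_Integration.integrable_bound)
        have kk: "((\<lambda>r. (s - r) powr (b - 1)) has_integral (s powr b / b)) {0..s}"
          using kernel_has_integral[of b s] b True by simp
        have "(\<lambda>r. indicator {0..s} r * (s - r) powr (b - 1)) \<in> borel_measurable borel"
        proof -
          have "(\<lambda>r. indicator {0..s} r * (s - r) powr (b - 1)) = (\<lambda>r. (if 0 \<le> r \<and> r \<le> s then 1 else 0) * (s - r) powr (b - 1))"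
            by (auto simp: indicator_def fun_eq_iff)
          also have "\<dots> \<in> borel_measurable borel" by measurable
          finally show ?thesis .
        qed
        from nonneg_has_integral_lborel(1)[OF _ kk this]
        have "integrable lborel (\<lambda>r. indicator {0..s} r * (s - r) powr (b - 1))" by simp
        then show "integrable lborel (\<lambda>r. M' * (indicator {0..s} r * (s - r) powr (b - 1)))"
          by simp
        show "(\<lambda>r. indicator {0..s} r *\<^sub>R ((s - r) powr (b - 1) * g0 r)) \<in> borel_measurable lborel"
        proof -
          have "(\<lambda>r. indicator {0..s} r *\<^sub>R ((s - r) powr (b - 1) * g0 r)) = (\<lambda>r. (if 0 \<le> r \<and> r \<le> s then 1 else 0) * ((s - r) powr (b - 1) * g0 r))"
            by (auto simp: indicator_def fun_eq_iff)
          also have "\<dots> \<in> borel_measurable borel" by measurable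
          finally show ?thesis by simp
        qed
        show "AE r in lborel. norm (indicator {0..s} r *\<^sub>R ((s - r) powr (b - 1) * g0 r))
              \<le> norm (M' * (indicator {0..s} r * (s - r) powr (b - 1)))"
        proof (rule AE_I2)
          fix r
          have "\<bar>(s - r) powr (b - 1) * g0 r\<bar> \<le> (s - r) powr (b - 1) * M'"
            using gM'[of r] by (simp add: abs_mult mult_left_mono)
          then show "norm (indicator {0..s} r *\<^sub>R ((s - r) powr (b - 1) * g0 r))
              \<le> norm (M' * (indicator {0..s} r * (s - r) powr (b - 1)))"
            using M'0 by (auto simp: indicator_def abs_mult mult_ac)
        qed
      qed
      have "(\<integral>r. indicator {0..s} r * ((s - r) powr (b - 1) * g0 r) \<partial>lborel)
          = (LINT r:{0..s}|lborel. (s - r) powr (b - 1) * g0 r)"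
        by (simp add: set_lebesgue_integral_def)
      also have "\<dots> = integral {0..s} (\<lambda>r. (s - r) powr (b - 1) * g0 r)"
        by (rule set_borel_integral_eq_integral(2)[OF si])
      also have "\<dots> = integral {0..s} (\<lambda>r. (s - r) powr (b - 1) * g r)"
        using True by (intro integral_cong) (auto simp: g0_def indicator_def)
      finally show ?thesis by (simp add: fL_def)
    next
      case False
      then show ?thesis by simp
    qed
    finally show ?thesis .
  qed
  have fLi: "set_integrable lborel {0..x} fL"
    using intsnd unfolding inner set_integrable_def by simp
  show "fL integrable_on {0..x}" unfolding fL_def[symmetric]
    by (rule set_borel_integral_eq_integral(1)[OF fLi])
  have "integral {0..x} fL = (LINT s:{0..x}|lborel. fL s)"
    by (rule set_borel_integral_eq_integral(2)[OF fLi, symmetric])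
  also have "\<dots> = (\<integral>s. (\<integral>r. F r s \<partial>lborel) \<partial>lborel)"
    unfolding inner by (simp add: set_lebesgue_integral_def)
  also have "\<dots> = (\<integral>r. \<Phi> r \<partial>lborel)" using fub Fint by simp
  also have "\<dots> = Beta a b * integral {0..x} (\<lambda>r. (x - r) powr (a + b - 1) * g r)"
  proof -
    have c: "continuous_on {0..x} (\<lambda>r. (x - r) powr (a + b - 1) * g r)"
      using ab by (intro continuous_intros continuous_on_powr' g) auto
    have "(\<integral>r. \<Phi> r \<partial>lborel) = Beta a b * (LINT r:{0..x}|lborel. (x - r) powr (a + b - 1) * g r)"
      unfolding set_lebesgue_integral_def integral_mult_right_zero[symmetric]
      by (rule Bochner_Integration.integral_cong) (auto simp: \<Phi>_def g0_def indicator_def)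
    also have "\<dots> = Beta a b * integral {0..x} (\<lambda>r. (x - r) powr (a + b - 1) * g r)"
      using set_borel_integral_eq_integral(2)[OF borel_integrable_atLeastAtMost'[OF c]] by simp
    finally show ?thesis .
  qed
  finally show "integral {0..x} (\<lambda>s. (x - s) powr (a - 1) * integral {0..s} (\<lambda>r. (s - r) powr (b - 1) * g r))
         = Beta a b * integral {0..x} (\<lambda>r. (x - r) powr (a + b - 1) * g r)"
    by (simp add: fL_def)
qed



theorem lemma3p1:
  fixes \<alpha> T t :: real and u :: "real \<Rightarrow> real"
  assumes "0 < \<alpha>" "\<alpha> < 1" "T > 1" "C1_on 0 T u" "t \<in> {0..T-1}"
  shows "RL_integral \<alpha> (\<lambda>\<tau>. integral {\<tau>..\<tau>+1} (\<lambda>s. caputo_deriv \<alpha> u s)) t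
       = integral {t..t+1} u - integral {0..1} u
         + (1 / Gamma (2 - \<alpha>)) * RL_integral \<alpha>
             (\<lambda>\<tau>. integral {0..1} (\<lambda>r. ((\<tau> + 1 - r) powr (1 - \<alpha>) - \<tau> powr (1 - \<alpha>)) * deriv u r)) t"
proof -
  have a0: "0 < \<alpha>" and a1: "\<alpha> < 1" and T1: "T > 1" and t0: "0 \<le> t" and tT: "t \<le> T - 1"
    using assms by auto
  obtain u' where hd: "\<And>x. x \<in> {0..T} \<Longrightarrow> (u has_real_derivative u' x) (at x within {0..T})"
    and cu': "continuous_on {0..T} u'"
    using assms(4) unfolding C1_on_def by blast
  have du: "deriv u r = u' r" if "0 < r" "r < T" for r
  proof -
    have "(u has_real_derivative u' r) (at r)"
      using hd[of r] that at_within_Icc_at[of 0 r T] by auto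
    then show ?thesis by (rule DERIV_imp_deriv)
  qed
  have hda: "(u has_real_derivative u' r) (at r)" if "0 < r" "r < T" for r
    using hd[of r] that at_within_Icc_at[of 0 r T] by auto
  have cu: "continuous_on {0..T} u"
    using hd DERIV_continuous continuous_on_eq_continuous_within by blast
  have cu'_sub: "continuous_on S u'" if "S \<subseteq> {0..T}" for S
    using continuous_on_subset[OF cu' that] .
  have cu_sub: "continuous_on S u" if "S \<subseteq> {0..T}" for S
    using continuous_on_subset[OF cu that] .
  have gA: "Gamma \<alpha> > 0" using a0 by (rule Gamma_real_pos)
  have gB: "Gamma (1 - \<alpha>) > 0" using a1 by (intro Gamma_real_pos) simp
  have gC: "Gamma (2 - \<alpha>) > 0" using a1 by (intro Gamma_real_pos) simp
  have G2: "Gamma (2 - \<alpha>) = (1 - \<alpha>) * Gamma (1 - \<alpha>)"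
    using Gamma_plus1[of "1 - \<alpha>"] nonpos_Ints_nonpos[of "1 - \<alpha>"] a1 by (auto simp: algebra_simps)
  have Gam2: "Gamma (2::real) = 1" using Gamma_plus1[of "1::real"] by simp
  have BB: "Beta \<alpha> (2 - \<alpha>) = Gamma \<alpha> * Gamma (2 - \<alpha>)"
    by (simp add: Beta_def Gam2)
  define J where "J = (\<lambda>y. integral {0..y} (\<lambda>r. (y - r) powr (1 - \<alpha>) * u' r))"
  define c where "c = u 1 - u 0"
  define Gd where "Gd = (\<lambda>\<tau>. integral {0..1} (\<lambda>r. ((\<tau> + 1 - r) powr (1 - \<alpha>) - \<tau> powr (1 - \<alpha>)) * u' r))"
  define h where "h = (\<lambda>r. u' (r + 1) - u' r)"
  define K where "K = (\<lambda>\<tau>. integral {0..\<tau>} (\<lambda>r. (\<tau> - r) powr (1 - \<alpha>) * h r))"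
  have S1: "caputo_deriv \<alpha> u s = (1 / Gamma (1 - \<alpha>)) * integral {0..s} (\<lambda>r. (s - r) powr (- \<alpha>) * u' r)"
    if "s \<in> {0..T}" for s
  proof -
    have "integral {0..s} (\<lambda>r. (s - r) powr (- \<alpha>) * deriv u r) = integral {0..s} (\<lambda>r. (s - r) powr (- \<alpha>) * u' r)"
      by (rule integral_spike[of "{0, T}"]) (use that du in auto)
    then show ?thesis by (simp add: caputo_deriv_def)
  qed
  have S2: "(\<lambda>s. caputo_deriv \<alpha> u s) integrable_on {0..y} \<and>
            integral {0..y} (\<lambda>s. caputo_deriv \<alpha> u s) = J y / Gamma (2 - \<alpha>)"
    if "y \<in> {0..T}" for y
  proof -
    have y0: "y \<ge> 0" using that by auto
    have cy: "continuous_on {0..y} u'" using that by (intro cu'_sub) auto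
    define ff where "ff = (\<lambda>s. integral {0..s} (\<lambda>r. (s - r) powr (- \<alpha>) * u' r))"
    note KF = key_fubini[of 1 "1 - \<alpha>" y u', OF _ _ _ y0 cy]
    have K1: "(\<lambda>s. (y - s) powr 0 * ff s) integrable_on {0..y}"
      using KF(1) a0 a1 by (simp add: ff_def)
    have K2: "integral {0..y} (\<lambda>s. (y - s) powr 0 * ff s) = Beta 1 (1 - \<alpha>) * J y"
      using KF(2) a0 a1 by (simp add: ff_def J_def)
    have ffi: "ff integrable_on {0..y}"
      by (rule integrable_spike_finite[of "{y}", OF _ _ K1]) auto
    have ffI: "integral {0..y} ff = Beta 1 (1 - \<alpha>) * J y"
      unfolding K2[symmetric] by (rule integral_spike[of "{y}"]) auto
    have eq: "caputo_deriv \<alpha> u s = (1 / Gamma (1 - \<alpha>)) * ff s" if "s \<in> {0..y}" for s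
      using S1[of s] that \<open>y \<in> {0..T}\<close> by (simp add: ff_def)
    have i1: "(\<lambda>s. caputo_deriv \<alpha> u s) integrable_on {0..y}"
      by (rule integrable_spike_finite[of "{}", OF _ _ integrable_cmul[OF ffi, of "1 / Gamma (1 - \<alpha>)"]])
         (use eq in auto)
    have "integral {0..y} (\<lambda>s. caputo_deriv \<alpha> u s) = integral {0..y} (\<lambda>s. (1 / Gamma (1 - \<alpha>)) * ff s)"
      using eq by (intro integral_cong) auto
    also have "\<dots> = (1 / Gamma (1 - \<alpha>)) * (Beta 1 (1 - \<alpha>) * J y)"
      using ffI by simp
    also have "\<dots> = J y / Gamma (2 - \<alpha>)"
    proof -
      have "Beta 1 (1 - \<alpha>) = Gamma (1 - \<alpha>) / Gamma (2 - \<alpha>)"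
        by (simp add: Beta_def)
      then show ?thesis using gB gC by simp
    qed
    finally show ?thesis using i1 by simp
  qed
  have S3: "integral {\<tau>..\<tau>+1} (\<lambda>s. caputo_deriv \<alpha> u s) = (Gd \<tau> + \<tau> powr (1 - \<alpha>) * c + K \<tau>) / Gamma (2 - \<alpha>)"
    if "\<tau> \<in> {0..T-1}" for \<tau>
  proof -
    have t0': "0 \<le> \<tau>" "\<tau> + 1 \<le> T" using that by auto
    have "integral {0..\<tau>} (\<lambda>s. caputo_deriv \<alpha> u s) + integral {\<tau>..\<tau>+1} (\<lambda>s. caputo_deriv \<alpha> u s)
        = integral {0..\<tau>+1} (\<lambda>s. caputo_deriv \<alpha> u s)"
      by (rule Henstock_Kurzweil_Integration.integral_combine) (use S2[of "\<tau>+1"] t0' in auto)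
    then have I: "integral {\<tau>..\<tau>+1} (\<lambda>s. caputo_deriv \<alpha> u s) = (J (\<tau>+1) - J \<tau>) / Gamma (2 - \<alpha>)"
      using S2[of \<tau>] S2[of "\<tau>+1"] t0' by (simp add: diff_divide_distrib)
    have "J (\<tau>+1) - J \<tau> = Gd \<tau> + \<tau> powr (1 - \<alpha>) * c + K \<tau>"
    proof -
      define f where "f = (\<lambda>r. (\<tau> + 1 - r) powr (1 - \<alpha>) * u' r)"
      have cf: "continuous_on {0..\<tau>+1} f" unfolding f_def using a1 t0'
        by (intro continuous_intros continuous_on_powr' cu'_sub) auto
      have fi: "f integrable_on {0..\<tau>+1}" by (rule integrable_continuous_interval[OF cf])
      have fi1: "f integrable_on {0..1}"
        by (rule integrable_continuous_interval) (rule continuous_on_subset[OF cf], use t0' in auto)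
      have j1: "J (\<tau>+1) = integral {0..1} f + integral {1..\<tau>+1} f"
        using Henstock_Kurzweil_Integration.integral_combine[of 0 1 "\<tau>+1" f] fi t0'
        by (simp add: J_def f_def)
      have fs: "(f \<circ> (+) 1) = (\<lambda>r. (\<tau> - r) powr (1 - \<alpha>) * u' (r + 1))"
        by (simp add: fun_eq_iff f_def algebra_simps)
      have j2: "integral {1..\<tau>+1} f = integral {0..\<tau>} (\<lambda>r. (\<tau> - r) powr (1 - \<alpha>) * u' (r + 1))"
        using integral_shift_Icc_real[of 0 \<tau> f 1] unfolding fs by (simp add: add.commute)
      have ftc: "(u' has_integral (u 1 - u 0)) {0..1}"
      proof (rule fundamental_theorem_of_calculus)
        fix x :: real assume x01: "x \<in> {0..1}"
        have sub: "{0..1} \<subseteq> {0..T}" using T1 by auto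
        have "x \<in> {0..T}" using x01 sub by blast
        from DERIV_subset[OF hd[OF this] sub]
        have "(u has_real_derivative u' x) (at x within {0..1})" .
        then show "(u has_vector_derivative u' x) (at x within {0..1})"
          by (simp add: has_real_derivative_iff_has_vector_derivative)
      qed simp
      have j3: "integral {0..1} f = Gd \<tau> + \<tau> powr (1 - \<alpha>) * c"
      proof -
        have "Gd \<tau> = integral {0..1} (\<lambda>r. f r - \<tau> powr (1 - \<alpha>) * u' r)"
          by (simp add: Gd_def f_def left_diff_distrib)
        also have "\<dots> = integral {0..1} f - integral {0..1} (\<lambda>r. \<tau> powr (1 - \<alpha>) * u' r)"
          by (rule integral_diff[OF fi1]) (use integrable_cmul[OF has_integral_integrable[OF ftc], of "\<tau> powr (1 - \<alpha>)"] in simp)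
        also have "integral {0..1} (\<lambda>r. \<tau> powr (1 - \<alpha>) * u' r) = \<tau> powr (1 - \<alpha>) * c"
          using integral_unique[OF ftc] by (simp add: c_def)
        finally show ?thesis by simp
      qed
      have j4: "K \<tau> = integral {0..\<tau>} (\<lambda>r. (\<tau> - r) powr (1 - \<alpha>) * u' (r + 1)) - J \<tau>"
      proof -
        have c1: "continuous_on {0..\<tau>} (\<lambda>r. (\<tau> - r) powr (1 - \<alpha>) * u' (r + 1))"
        proof (rule continuous_on_mult)
          show "continuous_on {0..\<tau>} (\<lambda>r. u' (r + 1))"
            by (rule continuous_on_compose2[OF cu']) (use t0' in \<open>auto intro!: continuous_intros\<close>)
          show "continuous_on {0..\<tau>} (\<lambda>r. (\<tau> - r) powr (1 - \<alpha>))"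
            by (rule continuous_on_powr') (use a1 in \<open>auto intro!: continuous_intros\<close>)
        qed
        have c2: "continuous_on {0..\<tau>} (\<lambda>r. (\<tau> - r) powr (1 - \<alpha>) * u' r)"
          using a1 t0' by (intro continuous_intros continuous_on_powr' cu'_sub) auto
        have "K \<tau> = integral {0..\<tau>} (\<lambda>r. (\<tau> - r) powr (1 - \<alpha>) * u' (r + 1) - (\<tau> - r) powr (1 - \<alpha>) * u' r)"
          by (simp add: K_def h_def right_diff_distrib)
        also have "\<dots> = integral {0..\<tau>} (\<lambda>r. (\<tau> - r) powr (1 - \<alpha>) * u' (r + 1)) - J \<tau>"
          unfolding J_def
          by (rule integral_diff) (use c1 c2 integrable_continuous_interval in auto)
        finally show ?thesis .
      qed
      show ?thesis using j1 j2 j3 j4 by simp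
    qed
    then show ?thesis using I by simp
  qed
  have S5: "integral {0..t} (\<lambda>r. (t - r) * h r) = integral {t..t+1} u - integral {0..1} u - t * c"
  proof -
    define H where "H = (\<lambda>r. u (r + 1) - u r)"
    have cu1: "continuous_on {0..t} (\<lambda>r. u (r + 1))"
      by (rule continuous_on_compose2[OF cu]) (use tT in \<open>auto intro!: continuous_intros\<close>)
    have cu0: "continuous_on {0..t} u" using tT by (intro cu_sub) auto
    have cH: "continuous_on {0..t} H" unfolding H_def using cu1 cu0 by (intro continuous_intros)
    have ftc: "((\<lambda>r. (-1) * H r + (t - r) * h r) has_integral ((t - t) * H t - (t - 0) * H 0)) {0..t}"
    proof (rule fundamental_theorem_of_calculus_interior[of 0 t "\<lambda>r. (t - r) * H r"])
      show "0 \<le> t" by (rule t0)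
      show "continuous_on {0..t} (\<lambda>r. (t - r) * H r)" using cH by (intro continuous_intros)
      fix x assume x: "x \<in> {0<..<t}"
      have d1: "(u has_real_derivative u' (x + 1)) (at (x + 1))"
        using x tT by (intro hda) auto
      have d1': "((\<lambda>r. u (r + 1)) has_real_derivative u' (x + 1)) (at x)"
        using d1 by (simp add: DERIV_shift)
      have d2: "(u has_real_derivative u' x) (at x)"
        using x tT by (intro hda) auto
      have "((\<lambda>r. (t - r) * H r) has_real_derivative ((-1) * H x + (t - x) * h x)) (at x)"
        unfolding H_def h_def
        by (rule derivative_eq_intros d1' d2 | simp)+
      then show "((\<lambda>r. (t - r) * H r) has_vector_derivative ((-1) * H x + (t - x) * h x)) (at x)"
        by (simp add: has_real_derivative_iff_has_vector_derivative)
    qed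
    have iH: "(H has_integral integral {0..t} H) {0..t}"
      using integrable_continuous_interval[OF cH] by (rule integrable_integral)
    have "((\<lambda>r. (-1) * H r + (t - r) * h r + H r) has_integral
            ((t - t) * H t - (t - 0) * H 0 + integral {0..t} H)) {0..t}"
      by (rule has_integral_add[OF ftc iH])
    then have "((\<lambda>r. (t - r) * h r) has_integral (integral {0..t} H - t * c)) {0..t}"
      by (simp add: H_def c_def algebra_simps)
    then have e1: "integral {0..t} (\<lambda>r. (t - r) * h r) = integral {0..t} H - t * c"
      by (rule integral_unique)
    have "integral {0..t} H = integral {0..t} (\<lambda>r. u (r + 1)) - integral {0..t} u"
      unfolding H_def
      by (rule integral_diff) (use cu1 cu0 integrable_continuous_interval in auto)
    also have "integral {0..t} (\<lambda>r. u (r + 1)) = integral {1..t+1} u"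
    proof -
      have "(u \<circ> (+) 1) = (\<lambda>r. u (r + 1))" by (simp add: fun_eq_iff add.commute)
      then show ?thesis using integral_shift_Icc_real[of 0 t u 1] by (simp add: add.commute)
    qed
    also have "integral {1..t+1} u - integral {0..t} u = integral {t..t+1} u - integral {0..1} u"
    proof -
      have ui: "u integrable_on {0..t+1}"
        by (rule integrable_continuous_interval, rule cu_sub) (use tT in auto)
      have "integral {0..1} u + integral {1..t+1} u = integral {0..t+1} u"
        by (rule Henstock_Kurzweil_Integration.integral_combine[OF _ _ ui]) (use t0 in auto)
      moreover have "integral {0..t} u + integral {t..t+1} u = integral {0..t+1} u"
        by (rule Henstock_Kurzweil_Integration.integral_combine[OF _ _ ui]) (use t0 in auto)
      ultimately show ?thesis by simp
    qed
    finally show ?thesis using e1 by simp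
  qed
  have S6: "integral {0..1} (\<lambda>r. ((\<tau> + 1 - r) powr (1 - \<alpha>) - \<tau> powr (1 - \<alpha>)) * deriv u r) = Gd \<tau>" for \<tau>
    unfolding Gd_def by (rule integral_spike[of "{0}"]) (use du T1 in auto)
  show ?thesis
  proof (cases "t = 0")
    case True
    then show ?thesis by (simp add: RL_integral_def)
  next
    case False
    then have tp: "t > 0" using t0 by simp
    define kern where "kern = (\<lambda>s. (t - s) powr (\<alpha> - 1))"
    define B where "B = Beta \<alpha> (2 - \<alpha>)"
    define I1 where "I1 = integral {0..t} (\<lambda>s. (t - s) powr (\<alpha> - 1) * Gd s)"
    define P where "P = integral {0..t} (\<lambda>r. (t - r) * h r)"
    have contGd: "continuous_on {0..t} Gd"
    proof -
      have "continuous_on ({0..t} \<times> cbox 0 1)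
          (\<lambda>(\<tau>, r). ((\<tau> + 1 - r) powr (1 - \<alpha>) - \<tau> powr (1 - \<alpha>)) * u' r)"
      proof -
        have c1: "continuous_on ({0..t} \<times> {0..1}) (\<lambda>p. u' (snd p))"
          by (rule continuous_on_compose2[OF cu' continuous_on_snd]) (use T1 in auto)
        have c2: "continuous_on ({0..t} \<times> {0..1}) (\<lambda>p::real\<times>real. (fst p + 1 - snd p) powr (1 - \<alpha>))"
          by (rule continuous_on_powr') (use a1 in \<open>auto intro!: continuous_intros\<close>)
        have c3: "continuous_on ({0..t} \<times> {0..1}) (\<lambda>p::real\<times>real. (fst p) powr (1 - \<alpha>))"
          by (rule continuous_on_powr') (use a1 in \<open>auto intro!: continuous_intros\<close>)
        have "continuous_on ({0..t} \<times> {0..1}) (\<lambda>p::real\<times>real. ((fst p + 1 - snd p) powr (1 - \<alpha>) - (fst p) powr (1 - \<alpha>)) * u' (snd p))"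
          by (rule continuous_on_mult[OF continuous_on_diff[OF c2 c3] c1])
        then show ?thesis by (simp add: case_prod_unfold)
      qed
      from integral_continuous_on_param[OF this]
      show ?thesis by (simp add: Gd_def)
    qed
    have kk: "(kern has_integral t powr \<alpha> / \<alpha>) {0..t}"
      unfolding kern_def using kernel_has_integral[of \<alpha> t] a0 t0 by simp
    have kabs: "kern absolutely_integrable_on {0..t}"
      by (rule nonnegative_absolutely_integrable_1[OF has_integral_integrable[OF kk]]) (simp add: kern_def)
    have A1: "(\<lambda>s. (t - s) powr (\<alpha> - 1) * Gd s) integrable_on {0..t}"
    proof -
      have "(\<lambda>s. Gd s * kern s) absolutely_integrable_on {0..t}"
      proof (rule absolutely_integrable_bounded_measurable_product_real[OF _ _ _ kabs])
        show "Gd \<in> borel_measurable (lebesgue_on {0..t})"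
          by (rule continuous_imp_measurable_on_sets_lebesgue[OF contGd]) simp
        show "bounded (Gd ` {0..t})"
          by (rule compact_imp_bounded[OF compact_continuous_image[OF contGd]]) simp
      qed simp
      then have "(\<lambda>s. Gd s * kern s) integrable_on {0..t}"
        using absolutely_integrable_on_def by blast
      then show ?thesis by (simp add: kern_def mult.commute)
    qed
    have A2: "((\<lambda>s. (t - s) powr (\<alpha> - 1) * s powr (1 - \<alpha>)) has_integral B * t) {0..t}"
      using beta_shift_has_integral[of \<alpha> "2 - \<alpha>" 0 t] a0 a1 tp by (simp add: B_def)
    have ch: "continuous_on {0..t} h"
    proof -
      have "continuous_on {0..t} (\<lambda>r. u' (r + 1))"
        by (rule continuous_on_compose2[OF cu']) (use tT in \<open>auto intro!: continuous_intros\<close>)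
      moreover have "continuous_on {0..t} u'" using tT by (intro cu'_sub) auto
      ultimately show ?thesis unfolding h_def by (intro continuous_intros)
    qed
    note KF = key_fubini[of \<alpha> "2 - \<alpha>" t h, OF a0 _ _ t0 ch]
    have A3i: "(\<lambda>s. (t - s) powr (\<alpha> - 1) * K s) integrable_on {0..t}"
      using KF(1) a1 by (simp add: K_def)
    have A3e: "integral {0..t} (\<lambda>s. (t - s) powr (\<alpha> - 1) * K s) = B * P"
    proof -
      have "integral {0..t} (\<lambda>s. (t - s) powr (\<alpha> - 1) * K s) = B * integral {0..t} (\<lambda>r. (t - r) powr 1 * h r)"
        using KF(2) a1 by (simp add: K_def B_def)
      also have "integral {0..t} (\<lambda>r. (t - r) powr 1 * h r) = P"
        unfolding P_def by (rule integral_cong) simp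
      finally show ?thesis .
    qed
    have eqF: "(1 / Gamma (2 - \<alpha>)) * ((t - s) powr (\<alpha> - 1) * Gd s + c * ((t - s) powr (\<alpha> - 1) * s powr (1 - \<alpha>))
                + (t - s) powr (\<alpha> - 1) * K s) = (t - s) powr (\<alpha> - 1) * integral {s..s+1} (\<lambda>s. caputo_deriv \<alpha> u s)"
      if "s \<in> {0..t}" for s
    proof -
      have e: "integral {s..s+1} (\<lambda>s. caputo_deriv \<alpha> u s) = (Gd s + s powr (1 - \<alpha>) * c + K s) / Gamma (2 - \<alpha>)"
        using S3[of s] that tT by auto
      show ?thesis unfolding e using gC by (simp add: field_simps)
    qed
    have HI: "((\<lambda>s. (t - s) powr (\<alpha> - 1) * integral {s..s+1} (\<lambda>s. caputo_deriv \<alpha> u s)) has_integral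
        (1 / Gamma (2 - \<alpha>)) * (I1 + c * (B * t) + B * P)) {0..t}"
    proof (rule has_integral_eq[OF eqF])
      show "((\<lambda>s. (1 / Gamma (2 - \<alpha>)) * ((t - s) powr (\<alpha> - 1) * Gd s + c * ((t - s) powr (\<alpha> - 1) * s powr (1 - \<alpha>))
                + (t - s) powr (\<alpha> - 1) * K s)) has_integral (1 / Gamma (2 - \<alpha>)) * (I1 + c * (B * t) + B * P)) {0..t}"
        unfolding I1_def A3e[symmetric]
        by (intro has_integral_mult_right has_integral_add integrable_integral A1 A3i A2)
    qed
    have L: "RL_integral \<alpha> (\<lambda>\<tau>. integral {\<tau>..\<tau>+1} (\<lambda>s. caputo_deriv \<alpha> u s)) t
        = (1 / Gamma \<alpha>) * ((1 / Gamma (2 - \<alpha>)) * (I1 + c * (B * t) + B * P))"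
      unfolding RL_integral_def using integral_unique[OF HI] by simp
    have R: "RL_integral \<alpha> (\<lambda>\<tau>. integral {0..1} (\<lambda>r. ((\<tau> + 1 - r) powr (1 - \<alpha>) - \<tau> powr (1 - \<alpha>)) * deriv u r)) t
        = (1 / Gamma \<alpha>) * I1"
      unfolding RL_integral_def S6 I1_def ..
    have P5: "P = integral {t..t+1} u - integral {0..1} u - t * c"
      using S5 by (simp add: P_def)
    have B5: "B = Gamma \<alpha> * Gamma (2 - \<alpha>)" using BB by (simp add: B_def)
    show ?thesis unfolding L R P5 B5
      using gA gC by (simp add: field_simps)
  qed
qed


end
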